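(* Assume $m_y=0$ and let $\Pi=\{\pi\ge 0: B_2^\intercal\pi\le c_2^\intercal\}$. For a given $x\in\mathcal X$, consider the bilinear program $\max\{(d-B_1x-Eu)^\intercal\pi:\ u\in\mathcal U(x),\ \pi\in\Pi\}$. When it has a finite optimal value, there exists an optimal solution $(u^*,\pi^* )$ with $\pi^*$ an extreme point of $\Pi$. When it is unbounded, there exist $u^*\in\mathcal U(x)$ and an extreme ray $\gamma^*$ of $\Pi$ such that $(d-B_1x-Eu^* )^\intercal\gamma^*>0$.
   Context: Let $\mathcal X=\{x\in\mathbb Z^{m_x}_+\times\mathbb R^{n_x}_+: Ax\ge b\}$, $\mathcal U(x)=\{u\in\mathbb Z^{m_u}_+\times\mathbb R^{n_u}_+: F(x)u\le h+Gx\}$ ($F(x)$ a matrix depending on $x$), and recourse set $\mathcal Y(x,u)=\{y\in\mathbb R^{n_y}_+: B_2y\ge d-B_1x-Eu\}$ with cost row vector $c_2$. Standing assumptions: (A1) $\mathcal U(x)\ne\emptyset$ for all $x\in\mathcal X$; (A2) $\mathcal U(x)$ is bounded for all $x\in\mathcal X$; (A3) $\min\{c_1x+c_2y: x\in\mathcal X,u\in\mathcal U(x),y\in\mathcal Y(x,u)\}$ has a finite optimal value. *)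

theory Defs
  imports "HOL-Analysis.Analysis"
begin

text \<open>Mixed-integer nonnegative vectors: all components nonnegative, components
  indexed by I integral (I plays the role of the first m coordinates in Z^m_+ x R^n_+).\<close>
definition mixed_int_nonneg :: "'n set \<Rightarrow> real^'n \<Rightarrow> bool" where
  "mixed_int_nonneg I v \<longleftrightarrow> (\<forall>i. 0 \<le> v $ i) \<and> (\<forall>i\<in>I. v $ i \<in> \<int>)"

definition rec_cone :: "'a::real_vector set \<Rightarrow> 'a set" where
  "rec_cone S = {g. \<forall>p\<in>S. \<forall>t::real. 0 \<le> t \<longrightarrow> p + t *\<^sub>R g \<in> S}"

definition extreme_ray_of :: "'a::real_vector \<Rightarrow> 'a set \<Rightarrow> bool" (infixr "extreme'_ray'_of" 50) where
  "g extreme_ray_of S \<longleftrightarrow> g \<noteq> 0 \<and> g \<in> rec_cone S \<and>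
     {t *\<^sub>R g | t::real. 0 \<le> t} face_of rec_cone S"

end

theory Submission
  imports Defs
begin

definition orth :: "(real^'n) set" where "orth = {x. \<forall>i. 0 \<le> x $ i}"

lemma ray_le_slope:
  fixes \<alpha> \<beta> \<gamma> :: real
  assumes "\<forall>t\<ge>0. \<alpha> + t * \<beta> \<le> \<gamma>" shows "\<beta> \<le> 0"
proof (rule ccontr)
  assume "\<not> \<beta> \<le> 0"
  hence b: "\<beta> > 0" by simp
  define t where "t = (\<bar>\<gamma> - \<alpha>\<bar> + 1) / \<beta>"
  have "t \<ge> 0" using b by (simp add: t_def)
  have "t * \<beta> = \<bar>\<gamma> - \<alpha>\<bar> + 1" using b by (simp add: t_def)
  with assms \<open>t \<ge> 0\<close> show False by force
qed

lemma ray_ge_slope: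
  fixes \<alpha> \<beta> \<gamma> :: real
  assumes "\<forall>t\<ge>0. \<gamma> \<le> \<alpha> + t * \<beta>" shows "0 \<le> \<beta>"
  using ray_le_slope[of "-\<alpha>" "-\<beta>" "-\<gamma>"] assms by force

lemma ray_orth:
  assumes "\<forall>t\<ge>0. p + t *\<^sub>R s \<in> (orth :: (real^'n) set)"
  shows "s \<in> orth"
  unfolding orth_def mem_Collect_eq
proof
  fix i
  have "\<forall>t\<ge>0. 0 \<le> p $ i + t * s $ i" using assms by (auto simp: orth_def)
  thus "0 \<le> s $ i" using ray_ge_slope[of 0 "p $ i" "s $ i"] by simp
qed

lemma no_line:
  assumes "\<forall>t\<ge>0. p + t *\<^sub>R s \<in> (orth :: (real^'n) set)" "\<forall>t\<ge>0. p + t *\<^sub>R (-s) \<in> orth"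
  shows "s = 0"
proof -
  have "s \<in> orth" "-s \<in> orth" using ray_orth assms by blast+
  thus ?thesis by (auto simp: orth_def vec_eq_iff intro: order.antisym)
qed

lemma walk_aux:
  fixes F :: "(real^'n) set" and f :: "real^'n"
  shows "nat (aff_dim F) = n \<Longrightarrow> polyhedron F \<Longrightarrow> F \<subseteq> orth \<Longrightarrow> \<pi> \<in> F \<Longrightarrow>
     (\<exists>v. v extreme_point_of F \<and> f \<bullet> \<pi> \<le> f \<bullet> v) \<or> (\<exists>p s. (\<forall>t\<ge>0. p + t *\<^sub>R s \<in> F) \<and> f \<bullet> s > 0)"
proof (induction n arbitrary: F \<pi> rule: less_induct)
  case (less n F \<pi>)
  show ?case
  proof (cases "\<pi> extreme_point_of F")
    case True thus ?thesis by auto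
  next
    case False
    then obtain a b where ab: "a \<in> F" "b \<in> F" "\<pi> \<in> open_segment a b"
      using less.prems(4) by (auto simp: extreme_point_of_def)
    hence "a \<noteq> b" by auto
    define s0 where "s0 = (if f \<bullet> (b - a) \<ge> 0 then b - a else a - b)"
    have s0: "s0 \<noteq> 0" "f \<bullet> s0 \<ge> 0" using \<open>a \<noteq> b\<close> by (auto simp: s0_def inner_diff_right)
    have aff: "z + l *\<^sub>R s0 \<in> affine hull F" if "z \<in> affine hull F" for z l
      unfolding s0_def
      using mem_affine_3_minus[OF affine_affine_hull that hull_inc[OF ab(2)] hull_inc[OF ab(1)]]
        mem_affine_3_minus[OF affine_affine_hull that hull_inc[OF ab(1)] hull_inc[OF ab(2)]]
      by auto
    have cvx: "convex F" using less.prems(2) polyhedron_imp_convex by blast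
    have clo: "closed F" using less.prems(2) polyhedron_imp_closed by blast
    show ?thesis
    proof (cases "(\<forall>t\<ge>0. \<pi> + t *\<^sub>R s0 \<in> F) \<and> f \<bullet> s0 > 0")
      case True thus ?thesis by blast
    next
      case False
      obtain s t1 where s: "f \<bullet> s \<ge> 0" "s = s0 \<or> s = -s0" and t1: "t1 \<ge> 0" "\<pi> + t1 *\<^sub>R s \<notin> F"
      proof (cases "\<exists>t1\<ge>0. \<pi> + t1 *\<^sub>R s0 \<notin> F")
        case True thus ?thesis using that s0 by blast
      next
        case False
        hence all: "\<forall>t\<ge>0. \<pi> + t *\<^sub>R s0 \<in> F" by blast
        with \<open>\<not> ((\<forall>t\<ge>0. \<pi> + t *\<^sub>R s0 \<in> F) \<and> f \<bullet> s0 > 0)\<close> s0 have "f \<bullet> s0 = 0" by auto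
        have "\<exists>t1\<ge>0. \<pi> + t1 *\<^sub>R (-s0) \<notin> F"
        proof (rule ccontr)
          assume "\<not> ?thesis"
          hence "\<forall>t\<ge>0. \<pi> + t *\<^sub>R (-s0) \<in> orth" using less.prems(3) by blast
          moreover have "\<forall>t\<ge>0. \<pi> + t *\<^sub>R s0 \<in> orth" using all less.prems(3) by blast
          ultimately have "s0 = 0" using no_line by blast
          thus False using s0 by simp
        qed
        then obtain t1 where "t1 \<ge> 0" "\<pi> + t1 *\<^sub>R (-s0) \<notin> F" by blast
        moreover have "f \<bullet> (-s0) \<ge> 0" using \<open>f \<bullet> s0 = 0\<close> by simp
        ultimately show ?thesis using that[of "-s0" t1] by blast
      qed
      have sne: "s \<noteq> 0" using s(2) s0(1) by auto
      have affs: "z + l *\<^sub>R s \<in> affine hull F" if "z \<in> affine hull F" for z l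
        using s(2) aff[OF that, of l] aff[OF that, of "-l"] by auto
      define K where "K = {t. 0 \<le> t \<and> \<pi> + t *\<^sub>R s \<in> F}"
      have "0 \<in> K" using less.prems(4) by (simp add: K_def)
      have bdd: "t \<le> t1" if "t \<in> K" for t
      proof (rule ccontr)
        assume "\<not> t \<le> t1"
        hence tt: "t1 < t" by simp
        hence "t > 0" using t1 by simp
        have "(1 - t1/t) *\<^sub>R \<pi> + (t1/t) *\<^sub>R (\<pi> + t *\<^sub>R s) \<in> F"
          using convexD_alt[OF cvx less.prems(4), of "\<pi> + t *\<^sub>R s" "t1/t"] that tt t1 \<open>t>0\<close>
          by (auto simp: K_def)
        moreover have "(1 - t1/t) *\<^sub>R \<pi> + (t1/t) *\<^sub>R (\<pi> + t *\<^sub>R s) = \<pi> + t1 *\<^sub>R s"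
          using \<open>t>0\<close> by (simp add: algebra_simps)
        ultimately show False using t1 by simp
      qed
      have "closed K"
      proof -
        have "K = {0..} \<inter> (\<lambda>t. \<pi> + t *\<^sub>R s) -` F" by (auto simp: K_def)
        moreover have "closed ((\<lambda>t. \<pi> + t *\<^sub>R s) -` F)"
          by (intro continuous_closed_vimage clo) (auto intro!: continuous_intros)
        ultimately show ?thesis by auto
      qed
      have bddK: "bdd_above K" using bdd by (auto simp: bdd_above_def)
      define T where "T = Sup K"
      have "T \<in> K" unfolding T_def using closed_contains_Sup[OF _ bddK \<open>closed K\<close>] \<open>0 \<in> K\<close> by blast
      define z where "z = \<pi> + T *\<^sub>R s"
      have zF: "z \<in> F" and T0: "T \<ge> 0" using \<open>T \<in> K\<close> by (auto simp: K_def z_def)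
      have fz: "f \<bullet> \<pi> \<le> f \<bullet> z" using T0 s(1) by (simp add: z_def inner_add_right)
      have "z \<notin> rel_interior F"
      proof
        assume "z \<in> rel_interior F"
        then obtain e where e: "e > 0" "cball z e \<inter> affine hull F \<subseteq> F"
          by (auto simp: mem_rel_interior_cball)
        define l where "l = e / norm s"
        have l: "l > 0" using e sne by (simp add: l_def)
        have "z + l *\<^sub>R s \<in> cball z e" using sne e(1) by (simp add: l_def dist_norm)
        moreover have "z + l *\<^sub>R s \<in> affine hull F" using affs[OF hull_inc[OF zF]] .
        ultimately have "z + l *\<^sub>R s \<in> F" using e by blast
        moreover have "z + l *\<^sub>R s = \<pi> + (T + l) *\<^sub>R s" by (simp add: z_def scaleR_add_left)
        ultimately have "T + l \<in> K" using T0 l unfolding K_def by simp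
        hence "T + l \<le> T" unfolding T_def using bddK by (rule cSup_upper)
        thus False using l by (simp add: T_def)
      qed
      hence "z \<in> rel_frontier F" using zF closure_subset by (auto simp: rel_frontier_def)
      then obtain G where G: "G facet_of F" "z \<in> G"
        using rel_frontier_of_polyhedron[OF less.prems(2)] by auto
      have "aff_dim F \<noteq> 0" using ab(1,2) \<open>a \<noteq> b\<close> by (auto simp: aff_dim_eq_0)
      moreover have "aff_dim F \<ge> 0" using ab(1) aff_dim_negative_iff[of F] by (metis empty_iff not_le)
      ultimately have lt: "nat (aff_dim G) < n" using G(1) less.prems(1) by (auto simp: facet_of_def)
      have pG: "polyhedron G" using G(1) less.prems(2) facet_of_imp_face_of face_of_polyhedron_polyhedron by blast
      have GF: "G \<subseteq> F" using G(1) facet_of_imp_subset by blast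
      have "(\<exists>v. v extreme_point_of G \<and> f \<bullet> z \<le> f \<bullet> v) \<or> (\<exists>p s. (\<forall>t\<ge>0. p + t *\<^sub>R s \<in> G) \<and> f \<bullet> s > 0)"
        using less.IH[OF lt refl pG _ G(2)] GF less.prems(3) by blast
      thus ?thesis
      proof
        assume "\<exists>v. v extreme_point_of G \<and> f \<bullet> z \<le> f \<bullet> v"
        then obtain v where "v extreme_point_of G" "f \<bullet> z \<le> f \<bullet> v" by blast
        hence "v extreme_point_of F" using extreme_point_of_face[OF facet_of_imp_face_of[OF G(1)]] by blast
        thus ?thesis using fz \<open>f \<bullet> z \<le> f \<bullet> v\<close> by auto
      next
        assume "\<exists>p s. (\<forall>t\<ge>0. p + t *\<^sub>R s \<in> G) \<and> f \<bullet> s > 0"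
        thus ?thesis using GF by blast
      qed
    qed
  qed
qed


lemma walk:
  fixes P :: "(real^'n) set" and f :: "real^'n"
  assumes "polyhedron P" "P \<subseteq> orth" "\<pi> \<in> P"
  shows "(\<exists>v. v extreme_point_of P \<and> f \<bullet> \<pi> \<le> f \<bullet> v) \<or> (\<exists>p s. (\<forall>t\<ge>0. p + t *\<^sub>R s \<in> P) \<and> f \<bullet> s > 0)"
  using walk_aux[OF refl assms] .

lemma polyP:
  fixes M :: "real^'r^'m" and c :: "real^'m"
  shows "polyhedron {\<pi>::real^'r. (\<forall>i. 0 \<le> \<pi> $ i) \<and> M *v \<pi> \<le> c}"
proof -
  have eq: "{\<pi>::real^'r. (\<forall>i. 0 \<le> \<pi> $ i) \<and> M *v \<pi> \<le> c} =
     \<Inter>(range (\<lambda>i. {\<pi>. (- axis i 1) \<bullet> \<pi> \<le> 0})) \<inter> \<Inter>(range (\<lambda>j. {\<pi>. (M $ j) \<bullet> \<pi> \<le> c $ j}))"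
    by (auto simp: less_eq_vec_def matrix_vector_mul_component inner_axis')
  show ?thesis unfolding eq
    by (intro polyhedron_Int polyhedron_Inter) (auto intro: polyhedron_halfspace_le polyhedron_halfspace_ge)
qed

definition sig :: "real^'n \<Rightarrow> real" where "sig g = (\<chi> i. 1) \<bullet> g"

lemma sig_sum: "sig g = (\<Sum>i\<in>UNIV. g $ i)"
  by (simp add: sig_def inner_vec_def)

lemma sig_add: "sig (a + b) = sig a + sig b" and sig_scale: "sig (c *\<^sub>R a) = c * sig a"
  by (simp_all add: sig_def inner_add_right)

lemma sig_nonneg: "g \<in> orth \<Longrightarrow> 0 \<le> sig g"
  by (simp add: sig_sum orth_def sum_nonneg)

lemma sig_zero: "g \<in> orth \<Longrightarrow> sig g = 0 \<Longrightarrow> g = 0"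
  by (simp add: sig_sum orth_def sum_nonneg_eq_0_iff vec_eq_iff)

lemma sig_pos: "g \<in> orth \<Longrightarrow> g \<noteq> 0 \<Longrightarrow> 0 < sig g"
  using sig_zero sig_nonneg by fastforce

lemma ext_ray:
  fixes C :: "(real^'n) set" and w :: "real^'n"
  assumes pC: "polyhedron C" and Co: "C \<subseteq> orth" and conic: "\<And>g t. g \<in> C \<Longrightarrow> 0 \<le> t \<Longrightarrow> t *\<^sub>R g \<in> C"
    and sC: "s \<in> C" and ws: "w \<bullet> s > 0"
  shows "\<exists>e. e \<noteq> 0 \<and> e \<in> C \<and> {t *\<^sub>R e | t. 0 \<le> t} face_of C \<and> w \<bullet> e > 0"
proof -
  define S where "S = C \<inter> {g. (\<chi> i. 1) \<bullet> g = (1::real)}"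
  have pS: "polyhedron S" unfolding S_def using pC by (intro polyhedron_Int polyhedron_hyperplane)
  have SC: "S \<subseteq> C" by (auto simp: S_def)
  have sigS: "g \<in> S \<Longrightarrow> sig g = 1" for g by (simp add: S_def sig_def)
  have inS: "g \<in> C \<Longrightarrow> sig g = 1 \<Longrightarrow> g \<in> S" for g by (simp add: S_def sig_def)
  have "s \<noteq> 0" using ws by auto
  hence sp: "sig s > 0" using sig_pos sC Co by blast
  define s' where "s' = (1 / sig s) *\<^sub>R s"
  have s'S: "s' \<in> S" using sp sC conic by (auto simp: s'_def sig_scale intro!: inS)
  have ws': "w \<bullet> s' > 0" using sp ws by (simp add: s'_def)
  from walk[OF pS _ s'S, of w] Co SC
  consider (ext) e where "e extreme_point_of S" "w \<bullet> s' \<le> w \<bullet> e"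
    | (ray) p s'' where "\<forall>t\<ge>0. p + t *\<^sub>R s'' \<in> S" "w \<bullet> s'' > 0" by blast
  thus ?thesis
  proof cases
    case ray
    have "\<forall>t\<ge>0. p + t *\<^sub>R s'' \<in> orth" using ray(1) SC Co by blast
    hence o: "s'' \<in> orth" by (rule ray_orth)
    have "sig (p + 0 *\<^sub>R s'') = 1" "sig (p + 1 *\<^sub>R s'') = 1" using sigS[OF ray(1)[rule_format, of 0]] sigS[OF ray(1)[rule_format, of 1]] by auto
    hence "sig s'' = 0" by (simp add: sig_add)
    hence "s'' = 0" using sig_zero o by blast
    thus ?thesis using ray(2) by simp
  next
    case ext
    have eS: "e \<in> S" using ext(1) by (simp add: extreme_point_of_def)
    hence eC: "e \<in> C" and se: "sig e = 1" using SC sigS by auto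
    hence "e \<noteq> 0" by (auto simp: sig_def)
    define R where "R = {t *\<^sub>R e | t. 0 \<le> (t::real)}"
    have RC: "R \<subseteq> C" using conic eC by (auto simp: R_def)
    have cR: "convex R"
      unfolding convex_def R_def
    proof (clarify)
      fix u v t1 t2 :: real
      assume "0 \<le> u" "0 \<le> v" "0 \<le> t1" "0 \<le> t2"
      thus "\<exists>t. u *\<^sub>R t1 *\<^sub>R e + v *\<^sub>R t2 *\<^sub>R e = t *\<^sub>R e \<and> 0 \<le> t"
        by (intro exI[of _ "u * t1 + v * t2"]) (simp add: scaleR_add_left)
    qed
    have half: "a \<in> R" if a: "a \<in> C" and b: "b \<in> C" and u: "0 < u" "u < 1" and t: "0 \<le> t"
       and eq: "(1 - u) *\<^sub>R a + u *\<^sub>R b = t *\<^sub>R e" for a b u t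
    proof -
      have ao: "a \<in> orth" and bo: "b \<in> orth" using a b Co by auto
      show ?thesis
      proof (cases "sig a = 0")
        case True
        hence "a = 0 *\<^sub>R e" using sig_zero ao by simp
        thus ?thesis by (auto simp: R_def)
      next
        case False
        hence sa: "sig a > 0" using sig_nonneg[OF ao] by simp
        show ?thesis
        proof (cases "sig b = 0")
          case True
          hence "b = 0" using sig_zero[OF bo] by blast
          hence "(1 - u) *\<^sub>R a = t *\<^sub>R e" using eq by simp
          hence "(1 / (1 - u)) *\<^sub>R ((1 - u) *\<^sub>R a) = (1 / (1 - u)) *\<^sub>R (t *\<^sub>R e)" by simp
          hence "a = (t / (1 - u)) *\<^sub>R e" using u by simp
          thus ?thesis using t u by (auto simp: R_def)
        next
          case False
          hence sb: "sig b > 0" using sig_nonneg[OF bo] by simp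
          have tsum: "t = (1 - u) * sig a + u * sig b"
            using arg_cong[OF eq, of sig] se by (simp add: sig_add sig_scale)
          hence tp: "t > 0" using sa sb u by (smt (verit) mult_pos_pos)
          define a' where "a' = (1 / sig a) *\<^sub>R a"
          define b' where "b' = (1 / sig b) *\<^sub>R b"
          have a'S: "a' \<in> S" using sa a conic by (auto simp: a'_def sig_scale intro!: inS)
          have b'S: "b' \<in> S" using sb b conic by (auto simp: b'_def sig_scale intro!: inS)
          define l where "l = u * sig b / t"
          have "(1 - u) * sig a > 0" using u sa by simp
          hence us: "u * sig b < t" using tsum by linarith
          have "0 < u * sig b" using u sb by simp
          hence l: "0 < l" "l < 1" using us tp by (auto simp: l_def field_simps)
          have e_eq: "e = (1 - l) *\<^sub>R a' + l *\<^sub>R b'"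
          proof -
            have "e = (1 / t) *\<^sub>R ((1 - u) *\<^sub>R a + u *\<^sub>R b)" using eq tp by simp
            also have "\<dots> = ((1 - u) / t) *\<^sub>R a + (u / t) *\<^sub>R b" by (simp add: scaleR_add_right)
            also have "((1 - u) / t) = (1 - l) * (1 / sig a)"
              using tp sa sb tsum by (simp add: l_def field_simps) (simp add: tsum algebra_simps)
            also have "u / t = l * (1 / sig b)"
              using tp sa sb by (simp add: l_def field_simps)
            also have "((1 - l) * (1 / sig a)) *\<^sub>R a + (l * (1 / sig b)) *\<^sub>R b = (1 - l) *\<^sub>R a' + l *\<^sub>R b'"
              by (simp only: a'_def b'_def scaleR_scaleR)
            finally show ?thesis .
          qed
          have "a' = b'"
          proof (rule ccontr)
            assume "a' \<noteq> b'"
            hence "e \<in> open_segment a' b'" using e_eq l by (auto simp: in_segment)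
            thus False using ext(1) a'S b'S by (auto simp: extreme_point_of_def)
          qed
          hence "e = a'" using e_eq by (simp add: algebra_simps)
          hence "a = sig a *\<^sub>R e" using sa by (simp add: a'_def)
          thus ?thesis using sa by (auto simp: R_def)
        qed
      qed
    qed
    have "R face_of C"
      unfolding face_of_def
    proof (intro conjI RC cR ballI impI)
      fix a b x assume ab: "a \<in> C" "b \<in> C" "x \<in> R" "x \<in> open_segment a b"
      then obtain t where t: "0 \<le> t" "x = t *\<^sub>R e" by (auto simp: R_def)
      obtain u where u: "0 < u" "u < 1" "x = (1 - u) *\<^sub>R a + u *\<^sub>R b" using ab(4) by (auto simp: in_segment)
      show "a \<in> R" using half[OF ab(1,2) u(1,2) t(1)] u(3) t(2) by simp
      show "b \<in> R" using half[OF ab(2,1), of "1 - u" t] u t by (simp add: add.commute)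
    qed
    moreover have "w \<bullet> e > 0" using ext(2) ws' by simp
    ultimately show ?thesis using \<open>e \<noteq> 0\<close> eC by (auto simp: R_def)
  qed
qed

theorem corollary3:
  fixes A :: "real^'nx^'q" and b :: "real^'q" and Ix :: "'nx set"
    and F :: "real^'nx \<Rightarrow> real^'nu^'p" and h :: "real^'p" and G :: "real^'nx^'p"
    and Iu :: "'nu set"
    and B2 :: "real^'ny^'r" and d :: "real^'r" and B1 :: "real^'nx^'r" and E :: "real^'nu^'r"
    and c1 :: "real^'nx" and c2 :: "real^'ny"
    and X :: "(real^'nx) set" and U :: "real^'nx \<Rightarrow> (real^'nu) set"
    and Y :: "real^'nx \<Rightarrow> real^'nu \<Rightarrow> (real^'ny) set"
    and Pi :: "(real^'r) set"
    and x :: "real^'nx"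
  assumes X_def: "X = {x. mixed_int_nonneg Ix x \<and> b \<le> A *v x}"
    and U_def: "\<And>x. U x = {u. mixed_int_nonneg Iu u \<and> F x *v u \<le> h + G *v x}"
    and Y_def: "\<And>x u. Y x u = {y. (\<forall>i. 0 \<le> y $ i) \<and> d - B1 *v x - E *v u \<le> B2 *v y}"
    and A1: "\<forall>x\<in>X. U x \<noteq> {}"
    and A2: "\<forall>x\<in>X. bounded (U x)"
    and A3: "{c1 \<bullet> x + c2 \<bullet> y | x u y. x \<in> X \<and> u \<in> U x \<and> y \<in> Y x u} \<noteq> {} \<and>
             bdd_below {c1 \<bullet> x + c2 \<bullet> y | x u y. x \<in> X \<and> u \<in> U x \<and> y \<in> Y x u}"
    and Pi_def: "Pi = {\<pi>. (\<forall>i. 0 \<le> \<pi> $ i) \<and> transpose B2 *v \<pi> \<le> c2}"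
    and x: "x \<in> X"
  shows "(({(d - B1 *v x - E *v u) \<bullet> \<pi> | u \<pi>. u \<in> U x \<and> \<pi> \<in> Pi} \<noteq> {} \<and>
           bdd_above {(d - B1 *v x - E *v u) \<bullet> \<pi> | u \<pi>. u \<in> U x \<and> \<pi> \<in> Pi})
         \<longrightarrow> (\<exists>u\<^sub>s\<in>U x. \<exists>\<pi>\<^sub>s. \<pi>\<^sub>s extreme_point_of Pi \<and>
                (\<forall>u\<in>U x. \<forall>\<pi>\<in>Pi. (d - B1 *v x - E *v u) \<bullet> \<pi> \<le> (d - B1 *v x - E *v u\<^sub>s) \<bullet> \<pi>\<^sub>s)))
       \<and> ((\<forall>M::real. \<exists>u\<in>U x. \<exists>\<pi>\<in>Pi. (d - B1 *v x - E *v u) \<bullet> \<pi> > M)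
         \<longrightarrow> (\<exists>u\<^sub>s\<in>U x. \<exists>\<gamma>. \<gamma> extreme_ray_of Pi \<and> (d - B1 *v x - E *v u\<^sub>s) \<bullet> \<gamma> > 0))"
proof -
  define w where "w u = d - B1 *v x - E *v u" for u
  have Ux_ne: "U x \<noteq> {}" and Ux_bd: "bounded (U x)" using A1 A2 x by auto
  have Ux_cl: "closed (U x)"
  proof -
    have eq: "U x = (\<Inter>i. {u. 0 \<le> u $ i}) \<inter> (\<Inter>i\<in>Iu. (\<lambda>u. u $ i) -` \<int>) \<inter>
                (\<Inter>j. {u. (F x *v u) $ j \<le> (h + G *v x) $ j})"
      by (auto simp: U_def mixed_int_nonneg_def less_eq_vec_def)
    show ?thesis unfolding eq
      by (intro closed_Int closed_INT ballI continuous_closed_vimage closed_Collect_le closed_Ints)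
         (auto intro!: continuous_intros simp: matrix_vector_mult_def)
  qed
  have Ux_cp: "compact (U x)" using Ux_cl Ux_bd by (simp add: compact_eq_bounded_closed)
  have pPi: "polyhedron Pi" unfolding Pi_def by (rule polyP)
  have Pio: "Pi \<subseteq> orth" by (auto simp: Pi_def orth_def)
  define Ext where "Ext = {v. v extreme_point_of Pi}"
  have finExt: "finite Ext" unfolding Ext_def using finite_polyhedron_extreme_points[OF pPi] .
  define NR where "NR u \<longleftrightarrow> \<not> (\<exists>p s. (\<forall>t\<ge>0. p + t *\<^sub>R s \<in> Pi) \<and> w u \<bullet> s > 0)" for u
  have wcont: "continuous_on (U x) (\<lambda>u. w u \<bullet> v)" for v
    unfolding w_def
    by (intro continuous_intros linear_continuous_on matrix_vector_mul_bounded_linear)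
  have key: "\<exists>us\<in>U x. \<exists>vs\<in>Ext. \<forall>u\<in>U x. \<forall>\<pi>\<in>Pi. w u \<bullet> \<pi> \<le> w us \<bullet> vs"
    if Pine: "Pi \<noteq> {}" and allNR: "\<forall>u\<in>U x. NR u"
  proof -
    have dom: "\<exists>v\<in>Ext. w u \<bullet> \<pi> \<le> w u \<bullet> v" if "u \<in> U x" "\<pi> \<in> Pi" for u \<pi>
    proof -
      have "NR u" using allNR that(1) by blast
      hence "\<not> (\<exists>p s. (\<forall>t\<ge>0. p + t *\<^sub>R s \<in> Pi) \<and> w u \<bullet> s > 0)" by (simp add: NR_def)
      with walk[OF pPi Pio that(2), of "w u"] show ?thesis unfolding Ext_def by blast
    qed
    have Extne: "Ext \<noteq> {}" using dom Pine Ux_ne by blast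
    have "\<forall>v\<in>Ext. \<exists>uv\<in>U x. \<forall>u\<in>U x. w u \<bullet> v \<le> w uv \<bullet> v"
      using continuous_attains_sup[OF Ux_cp Ux_ne wcont] by blast
    then obtain uv where uv: "\<And>v. v \<in> Ext \<Longrightarrow> uv v \<in> U x"
        "\<And>v u. v \<in> Ext \<Longrightarrow> u \<in> U x \<Longrightarrow> w u \<bullet> v \<le> w (uv v) \<bullet> v"
      by metis
    define m where "m = Max ((\<lambda>v. w (uv v) \<bullet> v) ` Ext)"
    have "m \<in> (\<lambda>v. w (uv v) \<bullet> v) ` Ext" unfolding m_def using finExt Extne by (intro Max_in) auto
    then obtain vs where vs: "vs \<in> Ext" "m = w (uv vs) \<bullet> vs" by blast
    have mge: "w (uv v) \<bullet> v \<le> m" if "v \<in> Ext" for v unfolding m_def using finExt that by (intro Max_ge) auto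
    show ?thesis
    proof (intro bexI[of _ "uv vs"] bexI[of _ vs] ballI)
      fix u \<pi> assume "u \<in> U x" "\<pi> \<in> Pi"
      then obtain v where "v \<in> Ext" "w u \<bullet> \<pi> \<le> w u \<bullet> v" using dom by blast
      thus "w u \<bullet> \<pi> \<le> w (uv vs) \<bullet> vs" using uv(2)[of v u] mge[of v] vs(2) \<open>u \<in> U x\<close> by linarith
    qed (use vs uv in auto)
  qed
  show ?thesis
  proof (intro conjI impI)
    assume H: "{(d - B1 *v x - E *v u) \<bullet> \<pi> | u \<pi>. u \<in> U x \<and> \<pi> \<in> Pi} \<noteq> {} \<and>
           bdd_above {(d - B1 *v x - E *v u) \<bullet> \<pi> | u \<pi>. u \<in> U x \<and> \<pi> \<in> Pi}"
    then obtain B where B: "\<And>u \<pi>. u \<in> U x \<Longrightarrow> \<pi> \<in> Pi \<Longrightarrow> w u \<bullet> \<pi> \<le> B"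
      unfolding bdd_above_def w_def by blast
    have Pine: "Pi \<noteq> {}" using H by blast
    have allNR: "\<forall>u\<in>U x. NR u"
    proof (intro ballI)
      fix u assume u: "u \<in> U x"
      show "NR u" unfolding NR_def
      proof
        assume "\<exists>p s. (\<forall>t\<ge>0. p + t *\<^sub>R s \<in> Pi) \<and> w u \<bullet> s > 0"
        then obtain p s where ps: "\<forall>t\<ge>0. p + t *\<^sub>R s \<in> Pi" "w u \<bullet> s > 0" by blast
        have "\<forall>t\<ge>0. w u \<bullet> p + t * (w u \<bullet> s) \<le> B"
        proof (intro allI impI)
          fix t :: real assume "0 \<le> t"
          hence "w u \<bullet> (p + t *\<^sub>R s) \<le> B" using B[OF u] ps(1) by blast
          thus "w u \<bullet> p + t * (w u \<bullet> s) \<le> B" by (simp add: inner_add_right)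
        qed
        hence "w u \<bullet> s \<le> 0" by (rule ray_le_slope)
        thus False using ps(2) by simp
      qed
    qed
    from key[OF Pine allNR] obtain us vs where "us \<in> U x" "vs \<in> Ext"
      "\<forall>u\<in>U x. \<forall>\<pi>\<in>Pi. w u \<bullet> \<pi> \<le> w us \<bullet> vs" by blast
    thus "\<exists>u\<^sub>s\<in>U x. \<exists>\<pi>\<^sub>s. \<pi>\<^sub>s extreme_point_of Pi \<and>
                (\<forall>u\<in>U x. \<forall>\<pi>\<in>Pi. (d - B1 *v x - E *v u) \<bullet> \<pi> \<le> (d - B1 *v x - E *v u\<^sub>s) \<bullet> \<pi>\<^sub>s)"
      unfolding w_def Ext_def by blast
  next
    assume H: "\<forall>M::real. \<exists>u\<in>U x. \<exists>\<pi>\<in>Pi. (d - B1 *v x - E *v u) \<bullet> \<pi> > M"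
    have Pine: "Pi \<noteq> {}" using H by blast
    have "\<not> (\<forall>u\<in>U x. NR u)"
    proof
      assume "\<forall>u\<in>U x. NR u"
      from key[OF Pine this] obtain us vs where "\<forall>u\<in>U x. \<forall>\<pi>\<in>Pi. w u \<bullet> \<pi> \<le> w us \<bullet> vs" by blast
      moreover obtain u \<pi> where "u \<in> U x" "\<pi> \<in> Pi" "w u \<bullet> \<pi> > w us \<bullet> vs"
        using H[rule_format, of "w us \<bullet> vs"] unfolding w_def by blast
      ultimately show False by force
    qed
    then obtain u p s where u: "u \<in> U x" and ps: "\<forall>t\<ge>0. p + t *\<^sub>R s \<in> Pi" "w u \<bullet> s > 0"
      unfolding NR_def by blast
    define C where "C = {g::real^'r. (\<forall>i. 0 \<le> g $ i) \<and> transpose B2 *v g \<le> 0}"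
    have pC: "polyhedron C" unfolding C_def by (rule polyP)
    have Co: "C \<subseteq> orth" by (auto simp: C_def orth_def)
    have conic: "t *\<^sub>R g \<in> C" if "g \<in> C" "0 \<le> t" for g t
      using that matrix_vector_mult_scaleR[of "transpose B2" t g]
      by (auto simp: C_def less_eq_vec_def mult_nonneg_nonpos mult_nonneg_nonneg)
    have rayC: "s' \<in> C" if "\<forall>t\<ge>0. p' + t *\<^sub>R s' \<in> Pi" for p' s'
    proof -
      have "0 \<le> s' $ i" for i
      proof -
        have "\<forall>t\<ge>0. 0 \<le> p' $ i + t * s' $ i" using that by (auto simp: Pi_def)
        thus ?thesis using ray_ge_slope[of 0 "p' $ i" "s' $ i"] by simp
      qed
      moreover have "(transpose B2 *v s') $ j \<le> 0" for j
      proof -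
        have "\<forall>t\<ge>0. (transpose B2 *v p') $ j + t * (transpose B2 *v s') $ j \<le> c2 $ j"
        proof (intro allI impI)
          fix t :: real assume "0 \<le> t"
          hence "transpose B2 *v (p' + t *\<^sub>R s') \<le> c2" using that unfolding Pi_def by blast
          hence "transpose B2 *v p' + t *\<^sub>R (transpose B2 *v s') \<le> c2"
            by (simp only: matrix_vector_right_distrib matrix_vector_mult_scaleR)
          thus "(transpose B2 *v p') $ j + t * (transpose B2 *v s') $ j \<le> c2 $ j"
            by (simp add: less_eq_vec_def)
        qed
        thus ?thesis by (rule ray_le_slope)
      qed
      ultimately show ?thesis by (auto simp: C_def less_eq_vec_def)
    qed
    have recC: "rec_cone Pi = C"
    proof
      show "rec_cone Pi \<subseteq> C"
      proof
        fix g assume "g \<in> rec_cone Pi"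
        moreover obtain p0 where "p0 \<in> Pi" using Pine by blast
        ultimately have "\<forall>t\<ge>0. p0 + t *\<^sub>R g \<in> Pi" by (auto simp: rec_cone_def)
        thus "g \<in> C" by (rule rayC)
      qed
      show "C \<subseteq> rec_cone Pi"
      proof (clarsimp simp: rec_cone_def)
        fix g p t assume g: "g \<in> C" and p: "p \<in> Pi" and t: "(0::real) \<le> t"
        have tg: "t *\<^sub>R g \<in> C" using conic g t by blast
        have "transpose B2 *v p \<le> c2" "transpose B2 *v (t *\<^sub>R g) \<le> 0"
          using p tg unfolding Pi_def C_def by blast+
        hence "transpose B2 *v p + transpose B2 *v (t *\<^sub>R g) \<le> c2 + 0" by (rule add_mono)
        hence "transpose B2 *v (p + t *\<^sub>R g) \<le> c2" by (simp only: matrix_vector_right_distrib add_0_right)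
        moreover have "\<forall>i. 0 \<le> (p + t *\<^sub>R g) $ i"
          using p tg unfolding Pi_def C_def by (simp add: add_nonneg_nonneg)
        ultimately show "p + t *\<^sub>R g \<in> Pi" unfolding Pi_def by blast
      qed
    qed
    have sC: "s \<in> C" using rayC ps(1) by blast
    from ext_ray[OF pC Co conic sC ps(2)] obtain e where
      e: "e \<noteq> 0" "e \<in> C" "{t *\<^sub>R e | t. 0 \<le> t} face_of C" "w u \<bullet> e > 0" by blast
    have "e extreme_ray_of Pi" unfolding extreme_ray_of_def recC using e by blast
    thus "\<exists>u\<^sub>s\<in>U x. \<exists>\<gamma>. \<gamma> extreme_ray_of Pi \<and> (d - B1 *v x - E *v u\<^sub>s) \<bullet> \<gamma> > 0"
      using u e(4) unfolding w_def by blast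
  qed
qed

end
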